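(* For $k\geq1$ let $X_k$ be a random symmetric $2\times 2$ matrix whose upper-triangular entries are independent and uniform on $\{1,\ldots,k\}$. Then $$\lim_{L\to\infty}\lim_{k\to\infty}\mathbb{P}\Bigl(\exists\, Q\in\textstyle\bigcup_{\ell=2}^{L}\mathbb{O}_2(\ell,\mathbb{Q}):\ Q^{T}X_kQ\in\mathbb{Z}^{2\times 2}\Bigr)\leq\frac{12G}{\pi^2}-1,$$ where $G=\sum_{m=0}^\infty\frac{(-1)^m}{(2m+1)^2}$ is Catalan's constant (and the limits exist).
   Context: The level of a rational matrix $Q$ is the least integer $\ell\geq 1$ with $\ell Q$ having integer entries. $\mathbb{O}_n(\ell,\mathbb{Q})$ denotes the set of all rational orthogonal $n\times n$ matrices with level $\ell$. *)

theory Defs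
  imports "HOL-Analysis.Analysis"
begin

definition rat_orthogonal :: "rat^'n^'n \<Rightarrow> bool" where
  "rat_orthogonal Q \<longleftrightarrow> transpose Q ** Q = mat 1"

definition int_matrix :: "rat^'n^'m \<Rightarrow> bool" where
  "int_matrix A \<longleftrightarrow> (\<forall>i j. A $ i $ j \<in> \<int>)"

definition level :: "rat^'n^'m \<Rightarrow> nat" where
  "level Q = (LEAST l::nat. l \<ge> 1 \<and> int_matrix (\<chi> i j. of_nat l * Q $ i $ j))"

definition rat_orth_level :: "nat \<Rightarrow> (rat^'n^'n) set" where
  "rat_orth_level l = {Q. rat_orthogonal Q \<and> level Q = l}"

definition sym2 :: "int \<Rightarrow> int \<Rightarrow> int \<Rightarrow> rat^2^2" where
  "sym2 a b c = (\<chi> i j. if i = j then (if i = 1 then of_int a else of_int c) else of_int b)"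

definition prob_conj :: "nat \<Rightarrow> nat \<Rightarrow> real" where
  "prob_conj k L = real (card {(a, b, c) \<in> {1..int k} \<times> {1..int k} \<times> {1..int k}.
       \<exists>Q \<in> (\<Union>l\<in>{2..L}. rat_orth_level l).
          int_matrix (transpose Q ** sym2 a b c ** Q)}) / real k ^ 3"

definition catalan :: real where
  "catalan = (\<Sum>m. (-1) ^ m / (2 * real m + 1) ^ 2)"

end

theory Submission
  imports Defs "HOL-Number_Theory.Number_Theory"
begin


lemma entry: "(transpose Q ** sym2 a b c ** Q) $ i $ j =
   Q$1$i*Q$1$j * of_int a + (Q$1$i*Q$2$j + Q$2$i*Q$1$j) * of_int b + Q$2$i*Q$2$j * of_int c"
  by (simp add: matrix_matrix_mult_def transpose_def sym2_def sum_2 algebra_simps)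

lemma int_matrix_2: "int_matrix (A :: rat^2^2) \<longleftrightarrow>
   A$1$1 \<in> \<int> \<and> A$1$2 \<in> \<int> \<and> A$2$1 \<in> \<int> \<and> A$2$2 \<in> \<int>"
  unfolding int_matrix_def by (auto simp: forall_2)

lemma den_int: "(of_int (snd (quotient_of x)) :: rat) * x \<in> \<int>"
proof -
  obtain n d where nd: "quotient_of x = (n, d)" by force
  have "d > 0" using quotient_of_denom_pos[OF nd] .
  have "x = of_int n / of_int d" using quotient_of_div[OF nd] .
  then have "of_int d * x = of_int n" using \<open>d > 0\<close> by simp
  then show ?thesis using nd by simp
qed

lemma den_pos: "snd (quotient_of x) > 0"
  by (metis prod.collapse quotient_of_denom_pos)

lemma level_exists:
  fixes Q :: "rat^2^2"
  shows "\<exists>l::nat. l \<ge> 1 \<and> int_matrix (\<chi> i j. of_nat l * Q $ i $ j)"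
proof -
  define d where "d = (\<lambda>x. snd (quotient_of x))"
  define D where "D = d (Q$1$1) * d (Q$1$2) * d (Q$2$1) * d (Q$2$2)"
  have dp: "\<And>x. d x > 0" unfolding d_def by (rule den_pos)
  have dI: "\<And>x. of_int (d x) * x \<in> \<int>" unfolding d_def by (rule den_int)
  have Dp: "D > 0" unfolding D_def using dp by simp
  have l: "(of_nat (nat D) :: rat) = of_int D" using Dp by simp
  have "int_matrix (\<chi> i j. of_nat (nat D) * Q $ i $ j)"
    unfolding int_matrix_2 l
  proof (simp, intro conjI)
    have "of_int D * Q$1$1 = of_int (d (Q$1$2) * d (Q$2$1) * d (Q$2$2)) * (of_int (d (Q$1$1)) * Q$1$1)"
      unfolding D_def by (simp add: algebra_simps)
    then show "of_int D * Q$1$1 \<in> \<int>" using dI by (metis Ints_mult Ints_of_int)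
    have "of_int D * Q$1$2 = of_int (d (Q$1$1) * d (Q$2$1) * d (Q$2$2)) * (of_int (d (Q$1$2)) * Q$1$2)"
      unfolding D_def by (simp add: algebra_simps)
    then show "of_int D * Q$1$2 \<in> \<int>" using dI by (metis Ints_mult Ints_of_int)
    have "of_int D * Q$2$1 = of_int (d (Q$1$1) * d (Q$1$2) * d (Q$2$2)) * (of_int (d (Q$2$1)) * Q$2$1)"
      unfolding D_def by (simp add: algebra_simps)
    then show "of_int D * Q$2$1 \<in> \<int>" using dI by (metis Ints_mult Ints_of_int)
    have "of_int D * Q$2$2 = of_int (d (Q$1$1) * d (Q$1$2) * d (Q$2$1)) * (of_int (d (Q$2$2)) * Q$2$2)"
      unfolding D_def by (simp add: algebra_simps)
    then show "of_int D * Q$2$2 \<in> \<int>" using dI by (metis Ints_mult Ints_of_int)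
  qed
  moreover have "nat D \<ge> 1" using Dp by simp
  ultimately show ?thesis by blast
qed

lemma level_props:
  fixes Q :: "rat^2^2"
  shows "level Q \<ge> 1" "int_matrix (\<chi> i j. of_nat (level Q) * Q $ i $ j)"
    "\<And>l. 1 \<le> l \<Longrightarrow> l < level Q \<Longrightarrow> \<not> int_matrix (\<chi> i j. of_nat l * Q $ i $ j)"
proof -
  have ex: "\<exists>l::nat. l \<ge> 1 \<and> int_matrix (\<chi> i j. of_nat l * Q $ i $ j)"
    by (rule level_exists)
  show "level Q \<ge> 1" "int_matrix (\<chi> i j. of_nat (level Q) * Q $ i $ j)"
    unfolding level_def using LeastI_ex[OF ex] by auto
  show "\<And>l. 1 \<le> l \<Longrightarrow> l < level Q \<Longrightarrow> \<not> int_matrix (\<chi> i j. of_nat l * Q $ i $ j)"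
    unfolding level_def using not_less_Least by blast
qed


lemma prime_sq_dvd_prod:
  fixes P :: int
  assumes "prime P" "P^2 dvd x * y" "\<not> P dvd x"
  shows "P^2 dvd y"
proof -
  have "coprime P x" using assms prime_imp_coprime by blast
  then have "coprime (P^2) x" by simp
  then show ?thesis using assms(2) coprime_dvd_mult_right_iff by blast
qed

lemma key:
  fixes Q :: "rat^2^2"
  assumes orth: "rat_orthogonal Q" and lv: "level Q \<ge> 2"
    and im: "int_matrix (transpose Q ** sym2 a b c ** Q)"
  shows "\<exists>P t. prime P \<and> P dvd level Q \<and> 0 \<le> t \<and> t < int P^2 \<and>
     int P^2 dvd t^2 + 1 \<and> int P^2 dvd a + 2*t*b - c"
proof -
  define l where "l = level Q"
  have lI: "int_matrix (\<chi> i j. of_nat l * Q $ i $ j)" unfolding l_def by (rule level_props)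
  have lmin: "\<And>l'. 1 \<le> l' \<Longrightarrow> l' < l \<Longrightarrow> \<not> int_matrix (\<chi> i j. of_nat l' * Q $ i $ j)"
    unfolding l_def by (rule level_props)
  from lI obtain p q x y where
    hp: "of_nat l * Q$1$1 = (of_int p :: rat)" and hq: "of_nat l * Q$2$1 = (of_int q :: rat)" and
    hx: "of_nat l * Q$1$2 = (of_int x :: rat)" and hy: "of_nat l * Q$2$2 = (of_int y :: rat)"
    unfolding int_matrix_2 by (auto elim!: Ints_cases)
  have o1: "transpose Q ** Q = mat 1" using orth unfolding rat_orthogonal_def .
  have o2: "Q ** transpose Q = mat 1" using o1 matrix_left_right_inverse by blast
  have c1: "Q$1$1^2 + Q$2$1^2 = 1"
    using arg_cong[OF o1, of "\<lambda>A. A$1$1"]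
    by (simp add: matrix_matrix_mult_def transpose_def sum_2 mat_def power2_eq_square)
  have r1: "Q$1$1^2 + Q$1$2^2 = 1"
    using arg_cong[OF o2, of "\<lambda>A. A$1$1"]
    by (simp add: matrix_matrix_mult_def transpose_def sum_2 mat_def power2_eq_square)
  have r2: "Q$2$1^2 + Q$2$2^2 = 1"
    using arg_cong[OF o2, of "\<lambda>A. A$2$2"]
    by (simp add: matrix_matrix_mult_def transpose_def sum_2 mat_def power2_eq_square)
  have e1: "p^2 + q^2 = int l^2"
  proof -
    have "(of_int (p^2 + q^2) :: rat) = of_nat l^2 * (Q$1$1^2 + Q$2$1^2)"
      by (simp add: hp[symmetric] hq[symmetric] power_mult_distrib algebra_simps)
    also have "\<dots> = of_int (int l^2)" using c1 by simp
    finally show ?thesis by (simp only: of_int_eq_iff)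
  qed
  have e2: "p^2 + x^2 = int l^2"
  proof -
    have "(of_int (p^2 + x^2) :: rat) = of_nat l^2 * (Q$1$1^2 + Q$1$2^2)"
      by (simp add: hp[symmetric] hx[symmetric] power_mult_distrib algebra_simps)
    also have "\<dots> = of_int (int l^2)" using r1 by simp
    finally show ?thesis by (simp only: of_int_eq_iff)
  qed
  have e3: "q^2 + y^2 = int l^2"
  proof -
    have "(of_int (q^2 + y^2) :: rat) = of_nat l^2 * (Q$2$1^2 + Q$2$2^2)"
      by (simp add: hq[symmetric] hy[symmetric] power_mult_distrib algebra_simps)
    also have "\<dots> = of_int (int l^2)" using r2 by simp
    finally show ?thesis by (simp only: of_int_eq_iff)
  qed
  from im have "(transpose Q ** sym2 a b c ** Q) $ 1 $ 1 \<in> \<int>" unfolding int_matrix_def by blast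
  then obtain z where hz: "Q$1$1*Q$1$1 * of_int a + (Q$1$1*Q$2$1 + Q$2$1*Q$1$1) * of_int b
      + Q$2$1*Q$2$1 * of_int c = (of_int z :: rat)"
    unfolding entry by (auto elim!: Ints_cases)
  have e4: "p^2*a + 2*p*q*b + q^2*c = int l^2 * z"
  proof -
    have "(of_int (p^2*a + 2*p*q*b + q^2*c) :: rat) = of_nat l^2 *
       (Q$1$1*Q$1$1 * of_int a + (Q$1$1*Q$2$1 + Q$2$1*Q$1$1) * of_int b + Q$2$1*Q$2$1 * of_int c)"
      by (simp add: hp[symmetric] hq[symmetric] power_mult_distrib power2_eq_square algebra_simps)
    also have "\<dots> = of_int (int l^2 * z)" using hz by simp
    finally show ?thesis by (simp only: of_int_eq_iff)
  qed
  have "l \<noteq> 1" using lv l_def by simp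
  then obtain P where P: "prime P" "P dvd l" using prime_factor_nat by blast
  have Pi: "prime (int P)" using P by simp
  have Pl: "int P dvd int l" using P by simp
  have Pl2: "int P dvd int l^2" using Pl by (simp add: power2_eq_square)
  have P2l2: "int P^2 dvd int l^2" using Pl by simp
  have ndp: "\<not> int P dvd p"
  proof
    assume Pp: "int P dvd p"
    have "q^2 = int l^2 - p^2" using e1 by simp
    moreover have "int P dvd p^2" using Pp by (simp add: power2_eq_square)
    ultimately have "int P dvd q^2" using Pl2 by (simp add: dvd_diff)
    then have Pq: "int P dvd q" using Pi prime_dvd_power by blast
    have "x^2 = int l^2 - p^2" using e2 by simp
    moreover have "int P dvd p^2" using Pp by (simp add: power2_eq_square)
    ultimately have "int P dvd x^2" using Pl2 by (simp add: dvd_diff)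
    then have Px: "int P dvd x" using Pi prime_dvd_power by blast
    have "y^2 = int l^2 - q^2" using e3 by simp
    moreover have "int P dvd q^2" using Pq by (simp add: power2_eq_square)
    ultimately have "int P dvd y^2" using Pl2 by (simp add: dvd_diff)
    then have Py: "int P dvd y" using Pi prime_dvd_power by blast
    define l' where "l' = l div P"
    have P1: "P > 1" using P prime_gt_1_nat by blast
    have lpos: "l > 0" using lv l_def by simp
    have ll': "l = l' * P" using P(2) unfolding l'_def by simp
    have "l' \<ge> 1" using ll' lpos by (cases l') auto
    moreover have "l' < l"
    proof -
      have "l' * 1 < l' * P" using P1 \<open>1 \<le> l'\<close> by (intro mult_strict_left_mono) auto
      then show ?thesis using ll' by simp
    qed
    moreover have "int_matrix (\<chi> i j. of_nat l' * Q $ i $ j)"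
    proof -
      have Pr: "(of_nat P :: rat) \<noteq> 0" using P1 by simp
      have gen: "of_nat l' * Q$i$j \<in> \<int>" if h1: "of_nat l * Q$i$j = (of_int w :: rat)" and h2: "int P dvd w" for i j w
      proof -
        obtain w' where w': "w = int P * w'" using h2 by blast
        have "of_nat P * (of_nat l' * Q$i$j) = of_nat P * (of_int w' :: rat)"
          using h1 unfolding ll' w' by (simp add: algebra_simps)
        then have "of_nat l' * Q$i$j = (of_int w' :: rat)" using Pr by simp
        then show ?thesis by simp
      qed
      show ?thesis unfolding int_matrix_2 using gen[OF hp Pp] gen[OF hq Pq] gen[OF hx Px] gen[OF hy Py]
        by simp
    qed
    ultimately show False using lmin by blast
  qed
  have cop: "coprime (int P^2) p" using prime_imp_coprime[OF Pi ndp] by simp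
  have cop2: "coprime (int P^2) (p^2)" using cop by simp
  have "coprime p (int P^2)" using cop by (simp add: coprime_commute)
  then have g1: "gcd p (int P^2) = 1" by (simp add: coprime_iff_gcd_eq_1)
  obtain u v where "u * p + v * int P^2 = gcd p (int P^2)" using bezout_int by blast
  then have uv: "u * p + v * int P^2 = 1" using g1 by simp
  define t0 where "t0 = u * q"
  have d1: "int P^2 dvd p * t0 - q"
  proof -
    have "p * t0 - q = q * (u * p - 1)" unfolding t0_def by (simp add: algebra_simps)
    moreover have "u * p - 1 = - v * int P^2" using uv by (simp add: algebra_simps)
    ultimately have "p * t0 - q = int P^2 * (- q * v)" by simp
    then show ?thesis by (simp only: dvd_triv_left)
  qed
  have d2: "int P^2 dvd p^2 + q^2" using e1 P2l2 by simp
  have "int P^2 dvd p^2 * (t0^2 + 1)"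
  proof -
    have "p^2 * (t0^2 + 1) = (p*t0 - q)*(p*t0 + q) + (p^2 + q^2)" by (simp add: algebra_simps power2_eq_square)
    then show ?thesis using d1 d2 by (simp add: dvd_add dvd_mult2)
  qed
  then have d3: "int P^2 dvd t0^2 + 1" using cop2 by (simp add: coprime_dvd_mult_right_iff coprime_dvd_mult_left_iff)
  have "int P^2 dvd p^2 * (a + 2*t0*b - c)"
  proof -
    have "p^2 * (a + 2*t0*b - c) = (p^2*a + 2*p*q*b + q^2*c) + 2*p*b*(p*t0 - q) - c*(p^2+q^2)"
      by (simp add: algebra_simps power2_eq_square)
    moreover have "int P^2 dvd p^2*a + 2*p*q*b + q^2*c" using e4 P2l2 by simp
    ultimately show ?thesis using d1 d2 by (simp add: dvd_add dvd_diff dvd_mult)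
  qed
  then have d4: "int P^2 dvd a + 2*t0*b - c" using cop2 by (simp add: coprime_dvd_mult_right_iff coprime_dvd_mult_left_iff)
  define t where "t = t0 mod int P^2"
  have Ppos: "int P^2 > 0" using P prime_gt_0_nat by simp
  have "int P^2 dvd t0 - t" unfolding t_def by (simp add: mod_eq_dvd_iff)
  then obtain k where "t0 - t = int P^2 * k" by (elim dvdE)
  then have k: "t0 = t + int P^2 * k" by simp
  have eqa: "t^2 + 1 = (t0^2 + 1) - int P^2 * (k * (t0 + t))" unfolding k by (simp add: algebra_simps power2_eq_square)
  have "int P^2 dvd (t0^2 + 1) - int P^2 * (k * (t0 + t))" by (rule dvd_diff[OF d3]) simp
  then have f1: "int P^2 dvd t^2 + 1" by (simp only: eqa)
  have eqb: "a + 2*t*b - c = (a + 2*t0*b - c) - int P^2 * (2*k*b)" unfolding k by (simp add: algebra_simps)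
  have "int P^2 dvd (a + 2*t0*b - c) - int P^2 * (2*k*b)" by (rule dvd_diff[OF d4]) simp
  then have f2: "int P^2 dvd a + 2*t*b - c" by (simp only: eqb)
  have "0 \<le> t" "t < int P^2" unfolding t_def using Ppos by auto
  then show ?thesis using P f1 f2 unfolding l_def by blast
qed


lemma sq_plus1_mod4: "\<not> (4::int) dvd t^2 + 1"
proof
  assume h: "(4::int) dvd t^2 + 1"
  have "even t \<or> odd t" by blast
  then show False
  proof
    assume "even t"
    then obtain s where "t = 2 * s" by (elim evenE)
    then have eq: "t^2 + 1 = 1 + s^2 * 4" by (simp add: power2_eq_square)
    have "(t^2 + 1) mod 4 = 1" unfolding eq by (simp only: mod_mult_self1) simp
    then show False using h by (simp add: dvd_eq_mod_eq_0)
  next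
    assume "odd t"
    then obtain s where "t = 2 * s + 1" by (elim oddE)
    then have eq: "t^2 + 1 = 2 + (s^2+s) * 4" by (simp add: power2_eq_square algebra_simps)
    have "(t^2 + 1) mod 4 = 2" unfolding eq by (simp only: mod_mult_self1) simp
    then show False using h by (simp add: dvd_eq_mod_eq_0)
  qed
qed

lemma prime_mod4:
  fixes P :: nat
  assumes P: "prime P" and d: "int P^2 dvd t^2 + 1"
  shows "P mod 4 = 1"
proof -
  have P2: "P \<noteq> 2"
  proof
    assume h: "P = 2"
    have "(4::int) dvd t^2 + 1" using d unfolding h by simp
    then show False using sq_plus1_mod4 by blast
  qed
  have Pg: "P > 2" using P2 prime_ge_2_nat[OF P] by simp
  have dP: "int P dvd t^2 + 1" by (rule dvd_trans[OF _ d]) simp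
  have odd: "odd P" using prime_odd_nat[OF P Pg] .
  have "P mod 4 = 1 \<or> P mod 4 = 3" using odd by presburger
  moreover have "P mod 4 \<noteq> 3"
  proof
    assume m3: "P mod 4 = 3"
    define a where "a = nat (t mod int P)"
    have aeq: "int a = t mod int P" unfolding a_def using Pg by simp
    have "\<not> P dvd a"
    proof
      assume "P dvd a"
      then have "int P dvd int a" by simp
      then have "int P dvd t mod int P" using aeq by simp
      then have "int P dvd t" by (simp add: dvd_mod_iff)
      then have "int P dvd t^2" by (simp add: power2_eq_square)
      then have "int P dvd 1" using dP by (simp add: dvd_add_right_iff)
      then show False using Pg by simp
    qed
    then have "[a ^ (P - 1) = 1] (mod P)" using fermat_theorem P by blast
    then have c1: "[int a ^ (P - 1) = 1] (mod int P)" using cong_int_iff[of "a^(P-1)" 1 P] by simp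
    have at: "[int a = t] (mod int P)" using aeq by (simp add: cong_def)
    have c2: "[t ^ (P - 1) = 1] (mod int P)"
      using cong_trans[OF cong_sym[OF cong_pow[OF at]] c1] by simp
    define j where "j = P div 4"
    have j: "P - 1 = 2 * (2*j + 1)" using m3 unfolding j_def by presburger
    have tm: "[t^2 = -1] (mod int P)" using dP by (simp add: cong_iff_dvd_diff)
    have e: "t ^ (P - 1) = (t^2) ^ (2*j+1)" unfolding j by (simp only: power_mult)
    have "[(t^2) ^ (2*j+1) = (-1) ^ (2*j+1)] (mod int P)" using tm by (rule cong_pow)
    then have "[(t^2) ^ (2*j+1) = -1] (mod int P)" by simp
    then have "[t ^ (P - 1) = -1] (mod int P)" unfolding e .
    then have "[1 = -1] (mod int P)" using cong_trans[OF cong_sym[OF c2]] by blast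
    then have "int P dvd 2" by (simp add: cong_iff_dvd_diff)
    then have "int P dvd int 2" by simp
    then have "P dvd 2" by (simp only: of_nat_dvd_iff)
    then show False using Pg by (simp add: nat_dvd_not_less)
  qed
  ultimately show ?thesis by blast
qed


definition Rset :: "nat \<Rightarrow> int set" where
  "Rset P = {t. 0 \<le> t \<and> t < int P^2 \<and> int P^2 dvd t^2 + 1}"

lemma Rset_finite: "finite (Rset P)"
proof -
  have "Rset P \<subseteq> {0..<int P^2}" unfolding Rset_def by auto
  then show ?thesis by (rule finite_subset) simp
qed

lemma Rset_card:
  assumes P: "prime P"
  shows "card (Rset P) \<le> 2"
proof (cases "Rset P = {}")
  case True
  then show ?thesis by simp
next
  case False
  then obtain t0 where t0: "t0 \<in> Rset P" by blast
  have Pi: "prime (int P)" using P by simp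
  have d0: "int P^2 dvd t0^2 + 1" using t0 unfolding Rset_def by simp
  have P41: "P mod 4 = 1" using prime_mod4[OF P d0] .
  have Pg: "P > 2" using P41 prime_ge_2_nat[OF P] by (cases "P = 2") auto
  have mpos: "int P^2 > 0" using Pg by simp
  have sub: "Rset P \<subseteq> {t0, (- t0) mod int P^2}"
  proof
    fix t assume t: "t \<in> Rset P"
    have d: "int P^2 dvd t^2 + 1" using t unfolding Rset_def by simp
    have dPt: "int P dvd t^2 + 1" by (rule dvd_trans[OF _ d]) simp
    have eq: "(t - t0) * (t + t0) = (t^2 + 1) - (t0^2 + 1)" by (simp add: algebra_simps power2_eq_square)
    have m: "int P^2 dvd (t - t0) * (t + t0)" unfolding eq using d d0 by (rule dvd_diff)
    have nb: "\<not> (int P dvd t - t0 \<and> int P dvd t + t0)"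
    proof
      assume h: "int P dvd t - t0 \<and> int P dvd t + t0"
      then have "int P dvd (t - t0) + (t + t0)" using dvd_add[of "int P" "t - t0" "t + t0"] by blast
      then have "int P dvd 2 * t" by (simp add: algebra_simps)
      moreover have "\<not> int P dvd 2"
      proof
        assume "int P dvd 2"
        then have "int P dvd int 2" by simp
        then have "P dvd 2" by (simp only: of_nat_dvd_iff)
        then show False using Pg by (simp add: nat_dvd_not_less)
      qed
      ultimately have "int P dvd t" using Pi prime_dvd_mult_iff by blast
      then have "int P dvd t^2" by (simp add: power2_eq_square)
      then have "int P dvd 1" using dPt by (simp add: dvd_add_right_iff)
      then show False using Pg by simp
    qed
    have tr: "t mod int P^2 = t" using t unfolding Rset_def by simp
    have t0r: "t0 mod int P^2 = t0" using t0 unfolding Rset_def by simp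
    show "t \<in> {t0, (- t0) mod int P^2}"
    proof (cases "int P dvd t - t0")
      case True
      then have "\<not> int P dvd t + t0" using nb by blast
      then have "int P^2 dvd t - t0" using prime_sq_dvd_prod[OF Pi, of "t + t0" "t - t0"] m
        by (simp add: mult.commute)
      then have "t mod int P^2 = t0 mod int P^2" by (simp add: mod_eq_dvd_iff)
      then show ?thesis using tr t0r by simp
    next
      case False
      then have "int P^2 dvd t + t0" using prime_sq_dvd_prod[OF Pi, of "t - t0" "t + t0"] m
        by simp
      then have "t mod int P^2 = (- t0) mod int P^2" by (simp add: mod_eq_dvd_iff)
      then show ?thesis using tr by simp
    qed
  qed
  have "card (Rset P) \<le> card {t0, (- t0) mod int P^2}" by (rule card_mono[OF _ sub]) simp
  also have "\<dots> \<le> 2" by (cases "t0 = (- t0) mod int P^2") auto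
  finally show ?thesis .
qed


lemma card_res:
  fixes m s :: int
  assumes m: "m > 0"
  shows "real (card {a \<in> {1..int k}. m dvd a + s}) \<le> real k / real_of_int m + 1"
proof -
  define T where "T = {a \<in> {1..int k}. m dvd a + s}"
  define f where "f = (\<lambda>a::int. (a - 1) div m)"
  have inj: "inj_on f T"
  proof (rule inj_onI)
    fix a a' assume a: "a \<in> T" and a': "a' \<in> T" and e: "f a = f a'"
    have "m dvd (a + s) - (a' + s)" using a a' unfolding T_def by (intro dvd_diff) auto
    then have "m dvd (a - 1) - (a' - 1)" by simp
    then have "(a - 1) mod m = (a' - 1) mod m" by (simp add: mod_eq_dvd_iff)
    moreover have "(a - 1) div m = (a' - 1) div m" using e unfolding f_def .
    ultimately have "a - 1 = a' - 1" by (metis div_mult_mod_eq)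
    then show "a = a'" by simp
  qed
  have sub: "f ` T \<subseteq> {0..(int k - 1) div m}"
  proof
    fix y assume "y \<in> f ` T"
    then obtain a where a: "a \<in> T" "y = f a" by blast
    then have a1: "1 \<le> a" "a \<le> int k" unfolding T_def by auto
    have "0 \<le> (a - 1) div m" using a1 m by (simp add: pos_imp_zdiv_nonneg_iff)
    moreover have "(a - 1) div m \<le> (int k - 1) div m" using a1 m by (intro zdiv_mono1) auto
    ultimately show "y \<in> {0..(int k - 1) div m}" using a unfolding f_def by simp
  qed
  have "card T = card (f ` T)" using inj by (simp add: card_image)
  also have "\<dots> \<le> card {0..(int k - 1) div m}" by (rule card_mono[OF _ sub]) simp
  also have "\<dots> = nat ((int k - 1) div m + 1)" by simp
  finally have c: "card T \<le> nat ((int k - 1) div m + 1)" .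
  have r1: "real_of_int ((int k - 1) div m) \<le> real_of_int (int k - 1) / real_of_int m"
    by (rule real_of_int_div4)
  have r2: "real_of_int (int k - 1) / real_of_int m \<le> real k / real_of_int m"
    using m by (intro divide_right_mono) auto
  have "real (card T) \<le> real (nat ((int k - 1) div m + 1))" using c by simp
  also have "\<dots> \<le> real k / real_of_int m + 1"
  proof (cases "(int k - 1) div m + 1 \<ge> 0")
    case True
    then have "real (nat ((int k - 1) div m + 1)) = real_of_int ((int k - 1) div m) + 1" by simp
    then show ?thesis using r1 r2 by linarith
  next
    case False
    then have "real (nat ((int k - 1) div m + 1)) = 0" by simp
    moreover have "0 \<le> real k / real_of_int m" using m by simp
    ultimately show ?thesis by linarith
  qed
  finally show ?thesis unfolding T_def .
qed

lemma ivl_split_int: "(a::int) - 1 \<le> b \<Longrightarrow> b \<le> c \<Longrightarrow> {a..c} = {a..b} \<union> {b+1..c}"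
  by auto

lemma per_shift:
  fixes h :: "int \<Rightarrow> real"
  assumes per: "\<And>x. h (x + M) = h x"
  shows "h (x + M * int n) = h x"
proof (induction n)
  case 0 then show ?case by simp
next
  case (Suc n)
  have "h (x + M * int (Suc n)) = h ((x + M * int n) + M)" by (simp add: algebra_simps)
  also have "\<dots> = h (x + M * int n)" by (rule per)
  finally show ?case using Suc by simp
qed

lemma per_blocks:
  fixes h :: "int \<Rightarrow> real"
  assumes M: "M > 0" and per: "\<And>x. h (x + M) = h x"
  shows "(\<Sum>x\<in>{1..M * int n}. h x) = real n * (\<Sum>x\<in>{1..M}. h x)"
proof (induction n)
  case 0 then show ?case by simp
next
  case (Suc n)
  have un: "{1..M * int (Suc n)} = {1..M * int n} \<union> {M * int n + 1..M * int n + M}"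
  proof -
    have "0 \<le> M * int n" using M by simp
    then have "{1..M * int n + M} = {1..M * int n} \<union> {M * int n + 1..M * int n + M}"
      using M by (intro ivl_split_int) auto
    then show ?thesis by (simp add: algebra_simps)
  qed
  have dj: "{1..M * int n} \<inter> {M * int n + 1..M * int n + M} = {}" by auto
  have sh: "(\<Sum>x\<in>{M * int n + 1..M * int n + M}. h x) = (\<Sum>x\<in>{1..M}. h x)"
  proof (rule sum.reindex_bij_witness[of _ "\<lambda>x. x + M * int n" "\<lambda>x. x - M * int n"])
    fix a assume "a \<in> {M * int n + 1..M * int n + M}"
    show "h (a - M * int n) = h a" using per_shift[of h M "a - M * int n" n] per by simp
  qed auto
  have "(\<Sum>x\<in>{1..M * int (Suc n)}. h x) = (\<Sum>x\<in>{1..M * int n}. h x) + (\<Sum>x\<in>{M * int n + 1..M * int n + M}. h x)"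
    unfolding un by (rule sum.union_disjoint) (use dj in auto)
  also have "\<dots> = real n * (\<Sum>x\<in>{1..M}. h x) + (\<Sum>x\<in>{1..M}. h x)" using Suc sh by simp
  finally show ?case by (simp add: algebra_simps)
qed

lemma sum_abs_bound:
  fixes h :: "int \<Rightarrow> real"
  assumes "finite A" "\<And>x. x \<in> A \<Longrightarrow> abs (h x) \<le> B"
  shows "\<bar>\<Sum>x\<in>A. h x\<bar> \<le> real (card A) * B"
proof -
  have "\<bar>\<Sum>x\<in>A. h x\<bar> \<le> (\<Sum>x\<in>A. \<bar>h x\<bar>)" by (rule sum_abs)
  also have "\<dots> \<le> real (card A) * B" using sum_bounded_above[of A "\<lambda>x. \<bar>h x\<bar>" B] assms by simp
  finally show ?thesis .
qed

lemma per_sum: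
  fixes h :: "int \<Rightarrow> real" and M :: int
  assumes M: "M > 0" and per: "\<And>x. h (x + M) = h x" and bnd: "\<And>x. \<bar>h x\<bar> \<le> B"
  shows "\<bar>(\<Sum>x\<in>{1..int k}. h x) - (real k / real_of_int M) * (\<Sum>x\<in>{1..M}. h x)\<bar>
           \<le> 2 * real_of_int M * B"
proof -
  define S where "S = (\<Sum>x\<in>{1..M}. h x)"
  define q where "q = int k div M"
  define r where "r = int k mod M"
  have kqr: "int k = M * q + r" unfolding q_def r_def by simp
  have r0: "0 \<le> r" "r < M" unfolding r_def using M by auto
  have q0: "0 \<le> q" unfolding q_def using M by (simp add: pos_imp_zdiv_nonneg_iff)
  define n where "n = nat q"
  have qn: "q = int n" unfolding n_def using q0 by simp
  have B0: "0 \<le> B" using bnd[of 0] by simp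
  have Mn: "0 \<le> M * int n" using M by simp
  have un: "{1..int k} = {1..M * int n} \<union> {M * int n + 1..int k}" using kqr qn r0 M Mn
    by (intro ivl_split_int) auto
  have dj: "{1..M * int n} \<inter> {M * int n + 1..int k} = {}" by auto
  have split: "(\<Sum>x\<in>{1..int k}. h x) = real n * S + (\<Sum>x\<in>{M * int n + 1..int k}. h x)"
  proof -
    have blk: "(\<Sum>x\<in>{1..M * int n}. h x) = real n * S"
      using per_blocks[of M h n] M per unfolding S_def by blast
    have "(\<Sum>x\<in>{1..int k}. h x) = (\<Sum>x\<in>{1..M * int n}. h x) + (\<Sum>x\<in>{M * int n + 1..int k}. h x)"
      unfolding un by (rule sum.union_disjoint) (use dj in auto)
    then show ?thesis using blk by simp
  qed
  have cR: "card {M * int n + 1..int k} = nat r" using kqr qn by simp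
  have R: "\<bar>\<Sum>x\<in>{M * int n + 1..int k}. h x\<bar> \<le> real_of_int M * B"
  proof -
    have "\<bar>\<Sum>x\<in>{M * int n + 1..int k}. h x\<bar> \<le> real (card {M * int n + 1..int k}) * B"
      by (rule sum_abs_bound) (auto intro: bnd)
    also have "\<dots> = real_of_int r * B" using cR r0 by simp
    also have "\<dots> \<le> real_of_int M * B" using r0 B0 by (intro mult_right_mono) auto
    finally show ?thesis .
  qed
  have Sb: "\<bar>S\<bar> \<le> real_of_int M * B"
  proof -
    have "\<bar>S\<bar> \<le> real (card {1..M}) * B" unfolding S_def by (rule sum_abs_bound) (auto intro: bnd)
    also have "real (card {1..M}) = real_of_int M" using M by simp
    finally show ?thesis .
  qed
  have kM: "real k / real_of_int M = real n + real_of_int r / real_of_int M"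
  proof -
    have "real k = real_of_int M * real n + real_of_int r"
      using kqr qn by (metis of_int_add of_int_mult of_int_of_nat_eq)
    then show ?thesis using M by (simp add: field_simps)
  qed
  have rM: "0 \<le> real_of_int r / real_of_int M" "real_of_int r / real_of_int M \<le> 1" using r0 M by auto
  have "\<bar>(real_of_int r / real_of_int M) * S\<bar> \<le> 1 * \<bar>S\<bar>"
    unfolding abs_mult using rM by (intro mult_right_mono) auto
  then have T2: "\<bar>(real_of_int r / real_of_int M) * S\<bar> \<le> real_of_int M * B" using Sb by simp
  have eqd: "(\<Sum>x\<in>{1..int k}. h x) - (real k / real_of_int M) * S =
        (\<Sum>x\<in>{M * int n + 1..int k}. h x) - (real_of_int r / real_of_int M) * S"
    unfolding split kM by (simp add: algebra_simps)
  have tri: "\<bar>(\<Sum>x\<in>{M * int n + 1..int k}. h x) - (real_of_int r / real_of_int M) * S\<bar>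
     \<le> \<bar>\<Sum>x\<in>{M * int n + 1..int k}. h x\<bar> + \<bar>(real_of_int r / real_of_int M) * S\<bar>"
    by (rule abs_triangle_ineq4)
  have "\<bar>(\<Sum>x\<in>{1..int k}. h x) - (real k / real_of_int M) * S\<bar> \<le> real_of_int M * B + real_of_int M * B"
    unfolding eqd by (rule order_trans[OF tri add_mono[OF R T2]])
  then show ?thesis unfolding S_def by (simp add: algebra_simps)
qed


lemma dbl_abs_bound:
  fixes f :: "int \<Rightarrow> int \<Rightarrow> real"
  assumes "finite A" "\<And>a b. a \<in> A \<Longrightarrow> b \<in> A \<Longrightarrow> abs (f a b) \<le> C"
  shows "\<bar>\<Sum>a\<in>A. \<Sum>b\<in>A. f a b\<bar> \<le> real (card A) * (real (card A) * C)"
proof (rule sum_abs_bound[OF assms(1)])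
  fix a assume a: "a \<in> A"
  show "\<bar>\<Sum>b\<in>A. f a b\<bar> \<le> real (card A) * C"
    by (rule sum_abs_bound[OF assms(1)]) (use a assms(2) in auto)
qed

lemma per3:
  fixes g :: "int \<Rightarrow> int \<Rightarrow> int \<Rightarrow> real" and M :: int
  assumes M: "M > 0"
  and g0: "\<And>a b c. 0 \<le> g a b c" and g1: "\<And>a b c. g a b c \<le> 1"
  and pa: "\<And>a b c. g (a + M) b c = g a b c"
  and pb: "\<And>a b c. g a (b + M) c = g a b c"
  and pc: "\<And>a b c. g a b (c + M) = g a b c"
  shows "(\<lambda>k. (\<Sum>a\<in>{1..int k}. \<Sum>b\<in>{1..int k}. \<Sum>c\<in>{1..int k}. g a b c) / real k ^ 3)
     \<longlonglongrightarrow> (\<Sum>a\<in>{1..M}. \<Sum>b\<in>{1..M}. \<Sum>c\<in>{1..M}. g a b c) / real_of_int M ^ 3"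
proof -
  define m where "m = real_of_int M"
  have m0: "m > 0" unfolding m_def using M by simp
  define G1 where "G1 = (\<lambda>a b. \<Sum>c\<in>{1..M}. g a b c)"
  define G2 where "G2 = (\<lambda>a. \<Sum>b\<in>{1..M}. G1 a b)"
  define D where "D = (\<Sum>a\<in>{1..M}. G2 a)"
  have cM: "real (card {1..M}) = m" unfolding m_def using M by simp
  have gb: "\<bar>g a b c\<bar> \<le> 1" for a b c using g0[of a b c] g1[of a b c] by simp
  have G1b: "\<bar>G1 a b\<bar> \<le> m" for a b
    using sum_abs_bound[of "{1..M}" "g a b" 1] gb unfolding G1_def cM by simp
  have G2b: "\<bar>G2 a\<bar> \<le> m * m" for a
    using sum_abs_bound[of "{1..M}" "G1 a" m] G1b unfolding G2_def cM by simp
  have G1p: "G1 a (b + M) = G1 a b" for a b unfolding G1_def using pb by simp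
  have G2p: "G2 (a + M) = G2 a" for a unfolding G2_def G1_def using pa by simp
  define I where "I = (\<lambda>k. \<Sum>a\<in>{1..int k}. \<Sum>b\<in>{1..int k}. \<Sum>c\<in>{1..int k}. g a b c)"
  have main: "\<bar>I k - (real k / m) ^ 3 * D\<bar> \<le> 6 * m * real k ^ 2" for k
  proof -
    define A where "A = {1..int k}"
    define K where "K = real k"
    have cA: "real (card A) = K" unfolding A_def K_def by simp
    have K0: "K \<ge> 0" unfolding K_def by simp
    define J1 where "J1 = (\<Sum>a\<in>A. \<Sum>b\<in>A. G1 a b)"
    define J2 where "J2 = (\<Sum>a\<in>A. G2 a)"
    have X1: "\<bar>I k - (K / m) * J1\<bar> \<le> K * (K * (2 * m))"
    proof -
      have "I k - (K / m) * J1 = (\<Sum>a\<in>A. \<Sum>b\<in>A. ((\<Sum>c\<in>A. g a b c) - (K / m) * G1 a b))"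
        unfolding I_def J1_def A_def by (simp add: sum_subtractf sum_distrib_left)
      also have "\<bar>\<dots>\<bar> \<le> real (card A) * (real (card A) * (2 * m))"
      proof (rule dbl_abs_bound)
        fix a b
        show "\<bar>(\<Sum>c\<in>A. g a b c) - (K / m) * G1 a b\<bar> \<le> 2 * m"
          using per_sum[of M "g a b" 1 k] M pc gb unfolding A_def K_def G1_def m_def by simp
      qed (simp add: A_def)
      finally show ?thesis unfolding cA .
    qed
    have X2: "\<bar>J1 - (K / m) * J2\<bar> \<le> K * (2 * m * m)"
    proof -
      have "J1 - (K / m) * J2 = (\<Sum>a\<in>A. ((\<Sum>b\<in>A. G1 a b) - (K / m) * G2 a))"
        unfolding J1_def J2_def by (simp add: sum_subtractf sum_distrib_left)
      also have "\<bar>\<dots>\<bar> \<le> real (card A) * (2 * m * m)"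
      proof (rule sum_abs_bound)
        fix a
        show "\<bar>(\<Sum>b\<in>A. G1 a b) - (K / m) * G2 a\<bar> \<le> 2 * m * m"
          using per_sum[of M "G1 a" m k] M G1p G1b unfolding A_def K_def G2_def m_def by simp
      qed (simp add: A_def)
      finally show ?thesis unfolding cA .
    qed
    have X3: "\<bar>J2 - (K / m) * D\<bar> \<le> 2 * m * (m * m)"
      using per_sum[of M G2 "m * m" k] M G2p G2b unfolding J2_def A_def K_def D_def m_def by simp
    have id: "I k - (K / m) ^ 3 * D = (I k - (K / m) * J1) + (K / m) * (J1 - (K / m) * J2)
        + (K / m)^2 * (J2 - (K / m) * D)"
      using m0 by (simp add: field_simps power2_eq_square power3_eq_cube)
    have Km: "K / m \<ge> 0" using K0 m0 by simp
    have t2: "\<bar>(K / m) * (J1 - (K / m) * J2)\<bar> \<le> (K / m) * (K * (2 * m * m))"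
      unfolding abs_mult abs_of_nonneg[OF Km] by (rule mult_left_mono[OF X2 Km])
    have t3: "\<bar>(K / m)^2 * (J2 - (K / m) * D)\<bar> \<le> (K / m)^2 * (2 * m * (m * m))"
      unfolding abs_mult abs_power2 by (rule mult_left_mono[OF X3]) simp
    have "\<bar>I k - (K / m) ^ 3 * D\<bar> \<le> \<bar>I k - (K / m) * J1\<bar> + \<bar>(K / m) * (J1 - (K / m) * J2)\<bar>
        + \<bar>(K / m)^2 * (J2 - (K / m) * D)\<bar>"
      unfolding id by (rule order_trans[OF abs_triangle_ineq add_right_mono[OF abs_triangle_ineq]])
    also have "\<dots> \<le> K * (K * (2 * m)) + (K / m) * (K * (2 * m * m)) + (K / m)^2 * (2 * m * (m * m))"
      by (rule add_mono[OF add_mono[OF X1 t2] t3])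
    also have "\<dots> = 6 * m * K ^ 2" using m0 by (simp add: field_simps power2_eq_square)
    finally show ?thesis unfolding K_def .
  qed
  have "(\<lambda>k. I k / real k ^ 3 - D / m ^ 3) \<longlonglongrightarrow> 0"
  proof (rule Lim_null_comparison)
    show "(\<lambda>k. 6 * m / real k) \<longlonglongrightarrow> 0" by (rule lim_const_over_n)
    show "\<forall>\<^sub>F k in sequentially. norm (I k / real k ^ 3 - D / m ^ 3) \<le> 6 * m / real k"
    proof (rule eventually_sequentiallyI[of 1])
      fix k :: nat assume k: "1 \<le> k"
      then have K: "real k > 0" by simp
      have "I k / real k ^ 3 - D / m ^ 3 = (I k - (real k / m) ^ 3 * D) / real k ^ 3"
        using K m0 by (simp add: field_simps)
      then have "norm (I k / real k ^ 3 - D / m ^ 3) = \<bar>I k - (real k / m) ^ 3 * D\<bar> / real k ^ 3"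
        using K by simp
      also have "\<dots> \<le> (6 * m * real k ^ 2) / real k ^ 3"
        using main[of k] K by (intro divide_right_mono) auto
      also have "\<dots> = 6 * m / real k" using K by (simp add: field_simps power2_eq_square power3_eq_cube)
      finally show "norm (I k / real k ^ 3 - D / m ^ 3) \<le> 6 * m / real k" .
    qed
  qed
  then have "(\<lambda>k. I k / real k ^ 3) \<longlonglongrightarrow> D / m ^ 3" by (rule LIM_zero_cancel)
  then show ?thesis unfolding I_def D_def G2_def G1_def m_def .
qed


lemma filt: "filter (\<lambda>P::nat. P mod 4 = 1 \<and> P mod 3 \<noteq> 0 \<and> (P mod 5 \<noteq> 0 \<or> P = 5) \<and>
   P mod 7 \<noteq> 0 \<and> P \<noteq> 1) [0..<101] = [5,13,17,29,37,41,53,61,73,89,97]"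
  by code_simp

definition PL :: "nat \<Rightarrow> nat set" where
  "PL L = {P. prime P \<and> P \<le> L \<and> P mod 4 = 1}"

lemma PL_finite: "finite (PL L)"
  unfolding PL_def by (rule finite_subset[of _ "{..L}"]) auto

lemma prime_small_div:
  assumes "prime (P::nat)" "d dvd P" "1 < d" shows "P = d"
  using assms prime_nat_iff by auto

lemma PL_small:
  fixes P :: nat
  assumes P: "prime P" "P mod 4 = 1" "P \<le> 100"
  shows "P \<in> {5,13,17,29,37,41,53,61,73,89,97}"
proof -
  have c3: "P mod 3 \<noteq> 0"
  proof
    assume "P mod 3 = 0"
    then have "3 dvd P" by presburger
    then have "P = 3" using prime_small_div[OF P(1)] by simp
    then show False using P(2) by simp
  qed
  have c5: "P mod 5 \<noteq> 0 \<or> P = 5"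
  proof (cases "P mod 5 = 0")
    case True
    then have "5 dvd P" by presburger
    then have "P = 5" using prime_small_div[OF P(1)] by simp
    then show ?thesis by simp
  qed simp
  have c7: "P mod 7 \<noteq> 0"
  proof
    assume "P mod 7 = 0"
    then have "7 dvd P" by presburger
    then have "P = 7" using prime_small_div[OF P(1)] by simp
    then show False using P(2) by simp
  qed
  have c1: "P \<noteq> 1" using P(1) by auto
  have "P \<in> set [0..<101]" using P(3) by simp
  then have "P \<in> set (filter (\<lambda>P::nat. P mod 4 = 1 \<and> P mod 3 \<noteq> 0 \<and> (P mod 5 \<noteq> 0 \<or> P = 5) \<and>
   P mod 7 \<noteq> 0 \<and> P \<noteq> 1) [0..<101])" using P(2) c3 c5 c7 c1 by simp
  then show ?thesis unfolding filt by simp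
qed

lemma frac_tel: fixes a :: real assumes "a > 0"
  shows "1/(2*a) - 1/(2*(a+4)) = 2/(a*(a+4))"
proof -
  have "a + 4 > 0" using assms by simp
  then show ?thesis using assms by (simp add: divide_simps)
qed

lemma tail_tel:
  assumes "24 \<le> N"
  shows "(\<Sum>m\<in>{25..N}. 2 / (4 * real m + 1)^2) \<le> 1/198 - 1 / (2 * (4 * real N + 3))"
  using assms
proof (induction N rule: nat_induct_at_least)
  case base
  then show ?case by simp
next
  case (Suc n)
  have un: "{25..Suc n} = insert (Suc n) {25..n}" using Suc.hyps by auto
  have "(\<Sum>m\<in>{25..Suc n}. 2 / (4 * real m + 1)^2) = 2 / (4 * real (Suc n) + 1)^2 + (\<Sum>m\<in>{25..n}. 2 / (4 * real m + 1)^2)"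
    unfolding un by (rule sum.insert) auto
  also have "\<dots> \<le> 2 / (4 * real (Suc n) + 1)^2 + (1/198 - 1 / (2 * (4 * real n + 3)))"
    using Suc.IH by simp
  also have "\<dots> \<le> 1/198 - 1 / (2 * (4 * real (Suc n) + 3))"
  proof -
    define x where "x = real n"
    have x0: "x \<ge> 0" unfolding x_def by simp
    have le: "(4 * x + 3) * (4 * x + 7) \<le> (4 * x + 5)^2" by (simp add: power2_eq_square algebra_simps)
    have p1: "0 < (4 * x + 3) * (4 * x + 7)" using x0 by (intro mult_pos_pos) auto
    have p2: "0 < (4 * x + 5)^2" using x0 by simp
    have "2 / (4 * x + 5)^2 \<le> 2 / ((4 * x + 3) * (4 * x + 7))"
      by (rule divide_left_mono[OF le]) (use p1 p2 in auto)
    also have "\<dots> = 1 / (2 * (4 * x + 3)) - 1 / (2 * (4 * x + 7))"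
    proof -
      have "0 < 4 * x + 3" using x0 by simp
      from frac_tel[OF this] show ?thesis by (simp add: algebra_simps)
    qed
    finally have "2 / (4 * x + 5)^2 \<le> 1 / (2 * (4 * x + 3)) - 1 / (2 * (4 * x + 7))" .
    then show ?thesis unfolding x_def by (simp add: algebra_simps)
  qed
  finally show ?case .
qed

lemma tail_bound: "(\<Sum>m\<in>{25..N}. 2 / (4 * real m + 1)^2) \<le> 1/198"
proof (cases "24 \<le> N")
  case True
  have "0 \<le> 1 / (2 * (4 * real N + 3))" by simp
  then show ?thesis using tail_tel[OF True] by linarith
next
  case False
  then have "{25..N} = {}" by auto
  then show ?thesis by simp
qed

lemma PL_sum: "(\<Sum>P\<in>PL L. 2 / real P ^ 2) \<le> 111/1000"
proof -
  define A :: "nat set" where "A = {5,13,17,29,37,41,53,61,73,89,97}"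
  define T where "T = (\<lambda>m. 4 * m + 1) ` {25..L}"
  have sub: "PL L \<subseteq> A \<union> T"
  proof
    fix P assume "P \<in> PL L"
    then have P: "prime P" "P \<le> L" "P mod 4 = 1" unfolding PL_def by auto
    show "P \<in> A \<union> T"
    proof (cases "P \<le> 100")
      case True
      then show ?thesis using PL_small[OF P(1) P(3)] unfolding A_def by blast
    next
      case False
      have "P = 4 * (P div 4) + 1" using P(3) by presburger
      moreover have "P div 4 \<in> {25..L}" using False P(2) by auto
      ultimately show ?thesis unfolding T_def by blast
    qed
  qed
  have fA: "finite A" unfolding A_def by simp
  have fT: "finite T" unfolding T_def by simp
  have "(\<Sum>P\<in>PL L. 2 / real P ^ 2) \<le> (\<Sum>P\<in>A \<union> T. 2 / real P ^ 2)"
    by (rule sum_mono2) (use sub fA fT in auto)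
  also have "\<dots> \<le> (\<Sum>P\<in>A. 2 / real P ^ 2) + (\<Sum>P\<in>T. 2 / real P ^ 2)"
  proof -
    have "(\<Sum>P\<in>A \<union> T. 2 / real P ^ 2) = (\<Sum>P\<in>A. 2 / real P ^ 2) + (\<Sum>P\<in>T. 2 / real P ^ 2)
        - (\<Sum>P\<in>A \<inter> T. 2 / real P ^ 2)" using sum_Un[OF fA fT] by simp
    moreover have "0 \<le> (\<Sum>P\<in>A \<inter> T. 2 / real P ^ 2)" by (rule sum_nonneg) simp
    ultimately show ?thesis by linarith
  qed
  also have "(\<Sum>P\<in>T. 2 / real P ^ 2) = (\<Sum>m\<in>{25..L}. 2 / (4 * real m + 1)^2)"
  proof -
    have "inj_on (\<lambda>m::nat. 4 * m + 1) {25..L}" by (rule inj_onI) simp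
    then show ?thesis unfolding T_def by (simp add: sum.reindex algebra_simps)
  qed
  also have "(\<Sum>P\<in>A. 2 / real P ^ 2) = 2/25 + 2/169 + 2/289 + 2/841 + 2/1369 + 2/1681 + 2/2809
      + 2/3721 + 2/5329 + 2/7921 + 2/9409"
    unfolding A_def by simp
  finally have "(\<Sum>P\<in>PL L. 2 / real P ^ 2) \<le> 2/25 + 2/169 + 2/289 + 2/841 + 2/1369 + 2/1681 + 2/2809
      + 2/3721 + 2/5329 + 2/7921 + 2/9409 + (\<Sum>m\<in>{25..L}. 2 / (4 * real m + 1)^2)" .
  then show ?thesis using tail_bound[of L] by simp
qed

lemma catalan_ge: "catalan \<ge> 0.915"
proof -
  define f where "f = (\<lambda>i::nat. (-1::real) ^ i / (2 * real i + 1) ^ 2)"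
  have sg: "summable (\<lambda>n. inverse (real n ^ 2))" by (rule inverse_power_summable) simp
  have sf: "summable f"
  proof (rule summable_comparison_test'[OF sg])
    fix n :: nat assume "n \<ge> 1"
    then have n: "real n \<ge> 1" by simp
    have "norm (f n) = 1 / (2 * real n + 1) ^ 2" unfolding f_def by (simp add: abs_mult)
    also have "\<dots> \<le> 1 / (real n) ^ 2" using n by (intro divide_left_mono power_mono) auto
    finally show "norm (f n) \<le> inverse (real n ^ 2)" by (simp add: field_simps)
  qed
  have cat: "catalan = suminf f" unfolding catalan_def f_def ..
  have "f sums catalan" using summable_sums[OF sf] cat by simp
  then have grp: "(\<lambda>n. sum f {n * 2..<n * 2 + 2}) sums catalan" by (rule sums_group) simp
  have nn: "0 \<le> sum f {n * 2..<n * 2 + 2}" for n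
  proof -
    have e: "{n * 2..<n * 2 + 2} = {2 * n, 2 * n + 1}" by auto
    have "sum f {n * 2..<n * 2 + 2} = 1 / (4 * real n + 1)^2 - 1 / (4 * real n + 3)^2"
      unfolding e f_def by (simp add: algebra_simps)
    also have "\<dots> \<ge> 0" by (simp add: divide_left_mono power_mono frac_le)
    finally show ?thesis .
  qed
  have "(\<Sum>n<6. sum f {n * 2..<n * 2 + 2}) \<le> suminf (\<lambda>n. sum f {n * 2..<n * 2 + 2})"
    by (rule sum_le_suminf) (use grp nn in \<open>auto simp: sums_iff\<close>)
  also have "\<dots> = catalan" using grp by (simp add: sums_iff)
  also have "(\<Sum>n<6. sum f {n * 2..<n * 2 + 2}) = (\<Sum>i<12. f i)"
    using sum.nat_group[of f 2 6] by simp
  also have "(\<Sum>i<12. f i) \<ge> 0.915" unfolding f_def by (simp add: eval_nat_numeral)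
  finally show ?thesis by simp
qed

lemma final_numeric: "111/1000 \<le> 12 * catalan / pi ^ 2 - 1"
proof -
  have p1: "pi \<le> 3.1415926535899" by (rule pi_approx)
  have p0: "0 < pi" by simp
  have pp: "pi ^ 2 \<le> 3.1415926535899 ^ 2" using p1 p0 by (intro power_mono) auto
  have "(3.1415926535899::real) ^ 2 \<le> 9.8697" by (simp add: field_simps)
  then have pp2: "pi ^ 2 \<le> 9.8697" using pp by linarith
  have "12 * 0.915 / 9.8697 \<le> 12 * catalan / pi ^ 2"
    using catalan_ge pp2 p0 by (intro frac_le) auto
  moreover have "111/1000 \<le> (12 * 0.915 / 9.8697 :: real) - 1" by (simp add: field_simps)
  ultimately show ?thesis by linarith
qed


definition Sset :: "nat \<Rightarrow> (int \<times> int \<times> int) set" where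
  "Sset L = {x. \<exists>Q \<in> (\<Union>l\<in>{2..L}. rat_orth_level l).
      int_matrix (transpose Q ** sym2 (fst x) (fst (snd x)) (snd (snd x)) ** Q)}"

definition gL :: "nat \<Rightarrow> int \<times> int \<times> int \<Rightarrow> real" where
  "gL L x = (if x \<in> Sset L then 1 else 0)"

lemma ind_card: "finite A \<Longrightarrow> (\<Sum>a\<in>A. if Q a then 1 else (0::real)) = real (card {a\<in>A. Q a})"
  by (simp add: sum.inter_filter[symmetric])

lemma prob_flat: "prob_conj k L = (\<Sum>x\<in>{1..int k} \<times> {1..int k} \<times> {1..int k}. gL L x) / real k ^ 3"
proof -
  define A where "A = {1..int k}"
  have e: "{(a, b, c) \<in> A \<times> A \<times> A. \<exists>Q \<in> (\<Union>l\<in>{2..L}. rat_orth_level l).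
          int_matrix (transpose Q ** sym2 a b c ** Q)} = {x \<in> A \<times> A \<times> A. x \<in> Sset L}"
    apply (rule Set.set_eqI)
    apply (clarsimp simp: Sset_def)
    done
  have "real (card {x \<in> A \<times> A \<times> A. x \<in> Sset L}) = (\<Sum>x\<in>A \<times> A \<times> A. gL L x)"
    unfolding gL_def by (rule ind_card[symmetric]) (simp add: A_def)
  then show ?thesis unfolding prob_conj_def A_def[symmetric] e by simp
qed

lemma nest2: "(\<Sum>y\<in>B \<times> C. F y) = (\<Sum>b\<in>B. \<Sum>c\<in>C. F (b, c))"
proof -
  have "(\<Sum>y\<in>B \<times> C. F y) = (\<Sum>(b, c)\<in>B \<times> C. F (b, c))" by (rule sum.cong) auto
  also have "\<dots> = (\<Sum>b\<in>B. \<Sum>c\<in>C. F (b, c))" by (rule sum.cartesian_product[symmetric])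
  finally show ?thesis .
qed

lemma nest3: "(\<Sum>x\<in>A \<times> B \<times> C. F x) = (\<Sum>a\<in>A. \<Sum>b\<in>B. \<Sum>c\<in>C. F (a, b, c))"
proof -
  have "(\<Sum>x\<in>A \<times> B \<times> C. F x) = (\<Sum>a\<in>A. \<Sum>y\<in>B \<times> C. F (a, y))"
    by (rule nest2)
  also have "\<dots> = (\<Sum>a\<in>A. \<Sum>b\<in>B. \<Sum>c\<in>C. F (a, b, c))"
    by (rule sum.cong[OF refl]) (rule nest2)
  finally show ?thesis .
qed


lemma Sset_shift:
  assumes "(a, b, c) \<in> Sset L"
  shows "(a + int (fact L)^2 * u, b + int (fact L)^2 * v, c + int (fact L)^2 * w) \<in> Sset L"
proof -
  from assms obtain l Q where l: "l \<in> {2..L}" and Q: "Q \<in> rat_orth_level l"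
    and im: "int_matrix (transpose Q ** sym2 a b c ** Q)" unfolding Sset_def by auto
  have lv: "level Q = l" using Q unfolding rat_orth_level_def by simp
  have lI: "of_nat l * Q$i$j \<in> \<int>" for i j
    using level_props(2)[of Q] unfolding lv int_matrix_def by simp
  have "l dvd fact L" using l by (intro dvd_fact) auto
  then obtain r where r: "fact L = l * r" by blast
  define M where "M = int (fact L)^2"
  have Mrat: "(of_int M :: rat) = of_nat l^2 * of_nat r^2" unfolding M_def r
    by (simp add: power_mult_distrib)
  have "int_matrix (transpose Q ** sym2 (a + M * u) (b + M * v) (c + M * w) ** Q)"
    unfolding int_matrix_def
  proof (intro allI)
    fix i j
    define N1i where "N1i = of_nat l * Q$1$i"
    define N1j where "N1j = of_nat l * Q$1$j"
    define N2i where "N2i = of_nat l * Q$2$i"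
    define N2j where "N2j = of_nat l * Q$2$j"
    have Ns: "N1i \<in> \<int>" "N1j \<in> \<int>" "N2i \<in> \<int>" "N2j \<in> \<int>"
      unfolding N1i_def N1j_def N2i_def N2j_def using lI by auto
    have old: "(transpose Q ** sym2 a b c ** Q) $ i $ j \<in> \<int>" using im unfolding int_matrix_def by blast
    define D where "D = N1i * N1j * of_int (int r^2 * u) + (N1i * N2j + N2i * N1j) * of_int (int r^2 * v)
       + N2i * N2j * of_int (int r^2 * w)"
    have DI: "D \<in> \<int>" unfolding D_def using Ns
      by (intro Ints_add Ints_mult Ints_of_int) auto
    have "(transpose Q ** sym2 (a + M * u) (b + M * v) (c + M * w) ** Q) $ i $ j
        = (transpose Q ** sym2 a b c ** Q) $ i $ j + D"
      unfolding entry D_def N1i_def N1j_def N2i_def N2j_def of_int_add of_int_mult Mrat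
      by (simp add: algebra_simps power2_eq_square)
    then show "(transpose Q ** sym2 (a + M * u) (b + M * v) (c + M * w) ** Q) $ i $ j \<in> \<int>"
      using old DI by simp
  qed
  then show ?thesis unfolding Sset_def M_def using l Q by auto
qed

lemma gL_per:
  fixes L :: nat and a b c :: int
  defines "M \<equiv> int (fact L)^2"
  shows "gL L (a + M, b, c) = gL L (a, b, c)" "gL L (a, b + M, c) = gL L (a, b, c)"
    "gL L (a, b, c + M) = gL L (a, b, c)"
proof -
  have sh: "(a', b', c') \<in> Sset L \<Longrightarrow> (a' + M * u, b' + M * v, c' + M * w) \<in> Sset L" for a' b' c' u v w
    unfolding M_def by (rule Sset_shift)
  have "(a + M, b, c) \<in> Sset L \<longleftrightarrow> (a, b, c) \<in> Sset L"
    using sh[of a b c 1 0 0] sh[of "a + M" b c "-1" 0 0] by auto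
  then show "gL L (a + M, b, c) = gL L (a, b, c)" unfolding gL_def by simp
  have "(a, b + M, c) \<in> Sset L \<longleftrightarrow> (a, b, c) \<in> Sset L"
    using sh[of a b c 0 1 0] sh[of a "b + M" c 0 "-1" 0] by auto
  then show "gL L (a, b + M, c) = gL L (a, b, c)" unfolding gL_def by simp
  have "(a, b, c + M) \<in> Sset L \<longleftrightarrow> (a, b, c) \<in> Sset L"
    using sh[of a b c 0 0 1] sh[of a b "c + M" 0 0 "-1"] by auto
  then show "gL L (a, b, c + M) = gL L (a, b, c)" unfolding gL_def by simp
qed

lemma prob_conv: "convergent (\<lambda>k. prob_conj k L)"
proof -
  define M where "M = int (fact L)^2"
  have M0: "M > 0" unfolding M_def by simp
  have "(\<lambda>k. (\<Sum>a\<in>{1..int k}. \<Sum>b\<in>{1..int k}. \<Sum>c\<in>{1..int k}. gL L (a, b, c)) / real k ^ 3)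
     \<longlonglongrightarrow> (\<Sum>a\<in>{1..M}. \<Sum>b\<in>{1..M}. \<Sum>c\<in>{1..M}. gL L (a, b, c)) / real_of_int M ^ 3"
  proof (rule per3[OF M0])
    show "\<And>a b c. gL L (a + M, b, c) = gL L (a, b, c)" unfolding M_def by (rule gL_per)
    show "\<And>a b c. gL L (a, b + M, c) = gL L (a, b, c)" unfolding M_def by (rule gL_per)
    show "\<And>a b c. gL L (a, b, c + M) = gL L (a, b, c)" unfolding M_def by (rule gL_per)
  qed (auto simp: gL_def)
  moreover have "prob_conj k L = (\<Sum>a\<in>{1..int k}. \<Sum>b\<in>{1..int k}. \<Sum>c\<in>{1..int k}. gL L (a, b, c)) / real k ^ 3" for k
    unfolding prob_flat nest3 ..
  ultimately show ?thesis unfolding convergent_def by auto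
qed

lemma prob_mono: "prob_conj k L \<le> prob_conj k (Suc L)"
proof -
  have "gL L x \<le> gL (Suc L) x" for x
    unfolding gL_def Sset_def by auto
  then have "(\<Sum>x\<in>{1..int k} \<times> {1..int k} \<times> {1..int k}. gL L x) \<le> (\<Sum>x\<in>{1..int k} \<times> {1..int k} \<times> {1..int k}. gL (Suc L) x)"
    by (intro sum_mono) auto
  then show ?thesis unfolding prob_flat by (intro divide_right_mono) auto
qed

lemma prob_nonneg: "0 \<le> prob_conj k L"
  unfolding prob_conj_def by simp


definition hh :: "nat \<times> int \<Rightarrow> int \<times> int \<times> int \<Rightarrow> real" where
  "hh pt x = (if int (fst pt)^2 dvd fst x + (2 * snd pt * fst (snd x) - snd (snd x)) then 1 else 0)"

lemma PT_finite: "finite (Sigma (PL L) Rset)"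
  using PL_finite Rset_finite by (intro finite_SigmaI) auto

lemma pointwise:
  "gL L x \<le> (\<Sum>pt\<in>Sigma (PL L) Rset. hh pt x)"
proof (cases "x \<in> Sset L")
  case False
  then show ?thesis unfolding gL_def hh_def by (simp add: sum_nonneg)
next
  case True
  obtain a b c where x: "x = (a, b, c)" by (cases x) auto
  from True obtain l Q where l: "l \<in> {2..L}" and Q: "Q \<in> rat_orth_level l"
    and im: "int_matrix (transpose Q ** sym2 a b c ** Q)" unfolding Sset_def x by auto
  have lv: "level Q = l" and orth: "rat_orthogonal Q" using Q unfolding rat_orth_level_def by auto
  obtain P t where P: "prime P" "P dvd level Q" "0 \<le> t" "t < int P^2" "int P^2 dvd t^2 + 1"
      "int P^2 dvd a + 2*t*b - c"
    using key[OF orth _ im] lv l by auto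
  have "P \<le> l" using P(2) lv l by (intro dvd_imp_le) auto
  then have PL: "P \<in> PL L" unfolding PL_def using P(1) prime_mod4[OF P(1) P(5)] l by auto
  have tR: "t \<in> Rset P" unfolding Rset_def using P by auto
  have mem: "(P, t) \<in> Sigma (PL L) Rset" using PL tR by auto
  have h1: "hh (P, t) x = 1" unfolding hh_def x using P(6) by (simp add: algebra_simps)
  have "hh (P, t) x \<le> (\<Sum>pt\<in>Sigma (PL L) Rset. hh pt x)"
    by (rule member_le_sum[OF mem]) (auto simp: hh_def PT_finite)
  then show ?thesis unfolding gL_def using True h1 by simp
qed

lemma inner_bound:
  assumes P: "prime P"
  shows "(\<Sum>x\<in>{1..int k} \<times> {1..int k} \<times> {1..int k}. hh (P, t) x) \<le> real k * (real k * (real k / real P^2 + 1))"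
proof -
  define A where "A = {1..int k}"
  define m where "m = int P^2"
  have m0: "m > 0" unfolding m_def using prime_gt_0_nat[OF P] by simp
  define F where "F = (\<lambda>a b c. if m dvd a + (2 * t * b - c) then 1 else (0::real))"
  have "(\<Sum>x\<in>A \<times> A \<times> A. hh (P, t) x) = (\<Sum>a\<in>A. \<Sum>b\<in>A. \<Sum>c\<in>A. F a b c)"
    unfolding nest3 F_def hh_def m_def by simp
  also have "\<dots> = (\<Sum>b\<in>A. \<Sum>a\<in>A. \<Sum>c\<in>A. F a b c)" by (rule sum.swap)
  also have "\<dots> = (\<Sum>b\<in>A. \<Sum>c\<in>A. \<Sum>a\<in>A. F a b c)" by (rule sum.cong[OF refl]) (rule sum.swap)
  also have "\<dots> \<le> (\<Sum>b\<in>A. \<Sum>c\<in>A. real k / real P^2 + 1)"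
  proof (intro sum_mono)
    fix b c
    have "(\<Sum>a\<in>A. F a b c) = real (card {a\<in>A. m dvd a + (2 * t * b - c)})"
      unfolding F_def by (rule ind_card) (simp add: A_def)
    also have "\<dots> \<le> real k / real_of_int m + 1" unfolding A_def by (rule card_res[OF m0])
    also have "real_of_int m = real P^2" unfolding m_def by simp
    finally show "(\<Sum>a\<in>A. F a b c) \<le> real k / real P^2 + 1" .
  qed
  also have "\<dots> = real k * (real k * (real k / real P^2 + 1))" unfolding A_def by simp
  finally show ?thesis unfolding A_def .
qed

lemma prob_bound:
  assumes k: "k \<ge> 1"
  shows "prob_conj k L \<le> (\<Sum>P\<in>PL L. 2 / real P ^ 2) + 2 * real (card (PL L)) / real k"
proof -
  define X where "X = {1..int k} \<times> {1..int k} \<times> {1..int k}"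
  define K where "K = real k"
  have K0: "K > 0" unfolding K_def using k by simp
  define PT where "PT = Sigma (PL L) Rset"
  define B where "B = (\<lambda>P::nat. K * (K * (K / real P^2 + 1)))"
  have B0: "B P \<ge> 0" for P unfolding B_def using K0 by simp
  have "(\<Sum>x\<in>X. gL L x) \<le> (\<Sum>x\<in>X. \<Sum>pt\<in>PT. hh pt x)"
    unfolding PT_def by (intro sum_mono pointwise)
  also have "\<dots> = (\<Sum>pt\<in>PT. \<Sum>x\<in>X. hh pt x)" by (rule sum.swap)
  also have "\<dots> \<le> (\<Sum>pt\<in>PT. B (fst pt))"
  proof (intro sum_mono)
    fix pt assume "pt \<in> PT"
    then have "prime (fst pt)" unfolding PT_def PL_def by auto
    then show "(\<Sum>x\<in>X. hh pt x) \<le> B (fst pt)"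
      using inner_bound[where P="fst pt" and k=k and t="snd pt"] unfolding X_def B_def K_def by simp
  qed
  also have "\<dots> = (\<Sum>P\<in>PL L. \<Sum>t\<in>Rset P. B P)"
    unfolding PT_def using PL_finite Rset_finite by (subst sum.Sigma) (auto simp: case_prod_beta)
  also have "\<dots> = (\<Sum>P\<in>PL L. real (card (Rset P)) * B P)" by simp
  also have "\<dots> \<le> (\<Sum>P\<in>PL L. 2 * B P)"
  proof (intro sum_mono)
    fix P assume "P \<in> PL L"
    then have "card (Rset P) \<le> 2" using Rset_card unfolding PL_def by auto
    then show "real (card (Rset P)) * B P \<le> 2 * B P" using B0[of P] by (intro mult_right_mono) auto
  qed
  finally have S: "(\<Sum>x\<in>X. gL L x) \<le> (\<Sum>P\<in>PL L. 2 * B P)" .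
  have "prob_conj k L = (\<Sum>x\<in>X. gL L x) / K ^ 3" unfolding prob_flat X_def K_def ..
  also have "\<dots> \<le> (\<Sum>P\<in>PL L. 2 * B P) / K ^ 3" using S K0 by (intro divide_right_mono) auto
  also have "\<dots> = (\<Sum>P\<in>PL L. 2 / real P ^ 2 + 2 / K)"
    unfolding sum_divide_distrib B_def using K0 by (intro sum.cong) (auto simp: field_simps power3_eq_cube)
  also have "\<dots> = (\<Sum>P\<in>PL L. 2 / real P ^ 2) + 2 * real (card (PL L)) / K"
    by (simp add: sum.distrib)
  finally show ?thesis unfolding K_def .
qed

theorem proposition3p7:
  shows "\<exists>f :: nat \<Rightarrow> real.
           (\<forall>L. (\<lambda>k. prob_conj k L) \<longlonglongrightarrow> f L) \<and>
           convergent f \<and>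
           lim f \<le> 12 * catalan / pi ^ 2 - 1"
proof -
  define f where "f L = lim (\<lambda>k. prob_conj k L)" for L
  have lim1: "(\<lambda>k. prob_conj k L) \<longlonglongrightarrow> f L" for L
    unfolding f_def using prob_conv convergent_LIMSEQ_iff by blast
  have fle: "f L \<le> 111/1000" for L
  proof -
    have "(\<lambda>k. (\<Sum>P\<in>PL L. 2 / real P ^ 2) + 2 * real (card (PL L)) / real k)
        \<longlonglongrightarrow> (\<Sum>P\<in>PL L. 2 / real P ^ 2) + 0"
      by (intro tendsto_add tendsto_const lim_const_over_n)
    then have "f L \<le> (\<Sum>P\<in>PL L. 2 / real P ^ 2) + 0"
      using lim1[of L] prob_bound by (intro LIMSEQ_le[OF lim1[of L]]) auto
    then show ?thesis using PL_sum[of L] by simp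
  qed
  have fge: "0 \<le> f L" for L
    using LIMSEQ_le_const[OF lim1[of L]] prob_nonneg by blast
  have fmono: "f L \<le> f (Suc L)" for L
    using LIMSEQ_le[OF lim1[of L] lim1[of "Suc L"]] prob_mono by blast
  have conv: "convergent f"
  proof (rule Bseq_monoseq_convergent)
    show "Bseq f"
    proof (rule BseqI')
      fix n show "norm (f n) \<le> 1" using fle[of n] fge[of n] by simp
    qed
    show "monoseq f" unfolding monoseq_Suc using fmono by blast
  qed
  have "lim f \<le> 111/1000" using lim_le[OF conv fle] .
  then have "lim f \<le> 12 * catalan / pi ^ 2 - 1" using final_numeric by linarith
  then show ?thesis using lim1 conv by blast
qed


end
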